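(* Let $d,n\in\mathbb{N}$ and $N=\binom{n+d-1}{n}$. (I) If the matrix $(v_1,\dots,v_N)\in\mathbb{R}^{d\times N}$ is random with a density with respect to Lebesgue measure on $\mathbb{R}^{d\times N}$ (in particular such $v_i$ exist), then almost surely the following holds: for every polynomial $p\in\mathbb{R}[x_1,\dots,x_d]$ of degree $n$ (order $n$), $p\equiv0$ if and only if $p(\lambda v_i)=0$ for all $\lambda\in\mathbb{R}$ and all $i=1,\dots,N$. (II) The number $N$ is optimal: for any $M<N$ and any $v_1,\dots,v_M\in\mathbb{R}^d$ there exists a non-zero polynomial $p\in\mathbb{R}[x_1,\dots,x_d]$ of degree $n$ such that $p(\lambda v_i)=0$ for all $\lambda\in\mathbb{R}$ and all $i=1,\dots,M$. *)

theory Defs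
  imports "HOL-Probability.Probability"
begin

text \<open>Real polynomials in the d variables x_0, ..., x_(d-1) of degree at most n are
  represented by their coefficient functions on exponent vectors (multi-indices).\<close>

definition monoms :: "nat \<Rightarrow> nat \<Rightarrow> (nat \<Rightarrow> nat) set" where
  "monoms d n = {\<alpha>. (\<forall>i. d \<le> i \<longrightarrow> \<alpha> i = 0) \<and> (\<Sum>i<d. \<alpha> i) \<le> n}"

definition polys :: "nat \<Rightarrow> nat \<Rightarrow> ((nat \<Rightarrow> nat) \<Rightarrow> real) set" where
  "polys d n = {c. \<forall>\<alpha>. \<alpha> \<notin> monoms d n \<longrightarrow> c \<alpha> = 0}"

definition peval :: "nat \<Rightarrow> nat \<Rightarrow> ((nat \<Rightarrow> nat) \<Rightarrow> real) \<Rightarrow> (nat \<Rightarrow> real) \<Rightarrow> real" where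
  "peval d n c x = (\<Sum>\<alpha>\<in>monoms d n. c \<alpha> * (\<Prod>i<d. x i ^ \<alpha> i))"

end

theory Submission
  imports Defs "Jordan_Normal_Form.Determinant"
begin

definition hmon :: "nat \<Rightarrow> nat \<Rightarrow> (nat \<Rightarrow> nat) set" where
  "hmon d k = {\<alpha>. (\<forall>i. d \<le> i \<longrightarrow> \<alpha> i = 0) \<and> (\<Sum>i<d. \<alpha> i) = k}"

lemma bij_count_hmon: "bij_betw count (multisets_of_size {..<d} k) (hmon d k)"
proof (rule bij_betwI[where g = "Abs_multiset"])
  show "count \<in> multisets_of_size {..<d} k \<rightarrow> hmon d k"
  proof
    fix X assume X: "X \<in> multisets_of_size {..<d} k"
    then have s: "set_mset X \<subseteq> {..<d}" "size X = k" by (auto simp: multisets_of_size_def)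
    have "(\<Sum>i<d. count X i) = size X"
      using s(1) by (subst size_multiset_overloaded_eq) (auto intro!: sum.mono_neutral_right simp: count_eq_zero_iff)
    moreover have "\<forall>i. d \<le> i \<longrightarrow> count X i = 0" using s(1) by (auto simp: count_eq_zero_iff)
    ultimately show "count X \<in> hmon d k" using s by (auto simp: hmon_def)
  qed
next
  show "Abs_multiset \<in> hmon d k \<rightarrow> multisets_of_size {..<d} k"
  proof
    fix a assume a: "a \<in> hmon d k"
    have fin: "finite {x. 0 < a x}"
      by (rule finite_subset[of _ "{..<d}"]) (use a in \<open>auto simp: hmon_def not_less[symmetric]\<close>)
    then have ca: "count (Abs_multiset a) = a" by (simp add: count_Abs_multiset)
    have ss: "set_mset (Abs_multiset a) \<subseteq> {..<d}" using a
      by (auto simp: set_mset_def ca hmon_def) (metis leI less_not_refl)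
    have "size (Abs_multiset a) = (\<Sum>i<d. a i)"
      using ss by (subst size_multiset_overloaded_eq) (auto intro!: sum.mono_neutral_left simp: not_in_iff ca)
    then show "Abs_multiset a \<in> multisets_of_size {..<d} k"
      using ss a by (auto simp: multisets_of_size_def hmon_def)
  qed
next
  fix X show "Abs_multiset (count X) = X" by (simp add: count_inverse)
next
  fix a assume a: "a \<in> hmon d k"
  have fin: "finite {x. 0 < a x}"
    by (rule finite_subset[of _ "{..<d}"]) (use a in \<open>auto simp: hmon_def not_less[symmetric]\<close>)
  then show "count (Abs_multiset a) = a" by (simp add: count_Abs_multiset)
qed

lemma card_hmon: "card (hmon d k) = (k + d - 1) choose k"
  using bij_betw_same_card[OF bij_count_hmon] card_multisets_of_size[of "{..<d}" k]
  by (simp add: add.commute)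

lemma finite_hmon: "finite (hmon d k)"
  using bij_betw_finite[OF bij_count_hmon] finite_multisets_of_size[of "{..<d}"] by auto

lemma card_hmon_mono:
  assumes "1 \<le> d" "k \<le> n" shows "card (hmon d k) \<le> card (hmon d n)"
proof -
  let ?f = "\<lambda>\<alpha>. \<alpha>(0 := \<alpha> 0 + (n - k))"
  have "inj_on ?f (hmon d k)"
    by (rule inj_onI) (metis add_right_cancel fun_upd_apply fun_upd_upd fun_upd_triv)
  moreover have "?f ` hmon d k \<subseteq> hmon d n"
  proof
    fix \<beta> assume "\<beta> \<in> ?f ` hmon d k"
    then obtain \<alpha> where a: "\<alpha> \<in> hmon d k" "\<beta> = ?f \<alpha>" by auto
    have "(\<Sum>i<d. \<beta> i) = (\<Sum>i<d. \<alpha> i) + (n - k)"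
    proof -
      have "(\<Sum>i<d. \<beta> i) = (\<Sum>i<d. \<alpha> i + (if i = 0 then n - k else 0))"
        using a(2) by (intro sum.cong) auto
      also have "\<dots> = (\<Sum>i<d. \<alpha> i) + (n - k)"
        using assms(1) by (simp add: sum.distrib)
      finally show ?thesis .
    qed
    then show "\<beta> \<in> hmon d n" using a assms by (auto simp: hmon_def)
  qed
  ultimately show ?thesis by (meson card_inj_on_le finite_hmon)
qed

lemma underdet:
  fixes a :: "nat \<Rightarrow> 'b \<Rightarrow> real"
  assumes "finite S" "m < card S"
  shows "\<exists>c. (\<forall>x. x \<notin> S \<longrightarrow> c x = 0) \<and> (\<exists>x\<in>S. c x \<noteq> 0) \<and> (\<forall>i<m. (\<Sum>x\<in>S. a i x * c x) = 0)"
  using assms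
proof (induction m arbitrary: S a)
  case 0
  then obtain x0 where "x0 \<in> S" by fastforce
  then show ?case by (intro exI[of _ "\<lambda>x. if x = x0 then 1 else 0"]) auto
next
  case (Suc m)
  show ?case
  proof (cases "\<forall>x\<in>S. a m x = 0")
    case True
    from Suc.IH[of S a] Suc.prems obtain c where c: "\<forall>x. x \<notin> S \<longrightarrow> c x = 0" "\<exists>x\<in>S. c x \<noteq> 0"
      "\<forall>i<m. (\<Sum>x\<in>S. a i x * c x) = 0" by auto
    show ?thesis using c True by (intro exI[of _ c]) (auto simp: less_Suc_eq)
  next
    case False
    then obtain x0 where x0: "x0 \<in> S" "a m x0 \<noteq> 0" by auto
    define b where "b i x = a i x - a i x0 * a m x / a m x0" for i x
    have fin: "finite (S - {x0})" "m < card (S - {x0})" using Suc.prems x0 by auto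
    from Suc.IH[OF fin, of b] obtain c where c: "\<forall>x. x \<notin> S - {x0} \<longrightarrow> c x = 0" "\<exists>x\<in>S - {x0}. c x \<noteq> 0"
      "\<forall>i<m. (\<Sum>x\<in>S - {x0}. b i x * c x) = 0" by auto
    define s where "s = (\<Sum>x\<in>S - {x0}. a m x * c x)"
    define c' where "c' = c(x0 := - s / a m x0)"
    have split: "(\<Sum>x\<in>S. g x) = g x0 + (\<Sum>x\<in>S - {x0}. g x)" for g :: "'b \<Rightarrow> real"
      using Suc.prems(1) x0(1) by (simp add: sum.remove)
    have c'S: "(\<Sum>x\<in>S - {x0}. g x * c' x) = (\<Sum>x\<in>S - {x0}. g x * c x)" for g :: "'b \<Rightarrow> real"
      by (intro sum.cong) (auto simp: c'_def)
    have eqs: "(\<Sum>x\<in>S. a i x * c' x) = 0" if "i < Suc m" for i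
    proof (cases "i = m")
      case True
      then show ?thesis using x0 by (simp add: split c'S) (simp add: c'_def s_def)
    next
      case False
      then have im: "i < m" using that by auto
      have "(\<Sum>x\<in>S - {x0}. b i x * c x) = (\<Sum>x\<in>S - {x0}. a i x * c x) - a i x0 / a m x0 * s"
        by (simp add: b_def s_def algebra_simps sum_subtractf sum_distrib_left)
      then have "(\<Sum>x\<in>S - {x0}. a i x * c x) = a i x0 / a m x0 * s" using c(3) im by auto
      then show ?thesis using x0 by (simp add: split c'S c'_def)
    qed
    show ?thesis
      using c eqs x0 by (intro exI[of _ c']) (auto simp: c'_def)
  qed
qed


lemma mono_ident:
  fixes c :: "(nat \<Rightarrow> nat) \<Rightarrow> real"
  assumes "finite S" "\<forall>\<alpha>\<in>S. \<forall>i\<ge>d. \<alpha> i = 0" "\<forall>x. (\<Sum>\<alpha>\<in>S. c \<alpha> * (\<Prod>i<d. x i ^ \<alpha> i)) = 0"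
  shows "\<forall>\<alpha>\<in>S. c \<alpha> = 0"
  using assms
proof (induction d arbitrary: S c)
  case 0
  then have S: "S \<subseteq> {\<lambda>_. 0}" by auto
  show ?case
  proof
    fix \<alpha> assume a: "\<alpha> \<in> S"
    then have "S = {\<alpha>}" using S by auto
    then show "c \<alpha> = 0" using "0.prems"(3) by auto
  qed
next
  case (Suc d)
  define K where "K = Max (insert 0 ((\<lambda>\<alpha>. \<alpha> d) ` S))"
  have K: "\<alpha> d \<le> K" if "\<alpha> \<in> S" for \<alpha> using that Suc.prems(1) by (auto simp: K_def)
  define g where "g y e = (\<Sum>\<alpha>\<in>{\<alpha>\<in>S. \<alpha> d = e}. c \<alpha> * (\<Prod>i<d. y i ^ \<alpha> i))" for y e
  have g0: "g y e = 0" if "e \<le> K" for y e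
  proof -
    have "(\<Sum>e\<le>K. g y e * t ^ e) = 0" for t
    proof -
      have "0 = (\<Sum>\<alpha>\<in>S. c \<alpha> * (\<Prod>i<Suc d. (y(d := t)) i ^ \<alpha> i))" by (rule Suc.prems(3)[rule_format, symmetric])
      also have "\<dots> = (\<Sum>\<alpha>\<in>S. c \<alpha> * (\<Prod>i<d. y i ^ \<alpha> i) * t ^ \<alpha> d)"
      proof (intro sum.cong refl)
        fix \<alpha>
        have "(\<Prod>i<d. (y(d := t)) i ^ \<alpha> i) = (\<Prod>i<d. y i ^ \<alpha> i)" by (intro prod.cong) auto
        then show "c \<alpha> * (\<Prod>i<Suc d. (y(d := t)) i ^ \<alpha> i) = c \<alpha> * (\<Prod>i<d. y i ^ \<alpha> i) * t ^ \<alpha> d"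
          by (simp add: lessThan_Suc)
      qed
      also have "\<dots> = (\<Sum>e\<le>K. \<Sum>\<alpha>\<in>{\<alpha>\<in>S. \<alpha> d = e}. c \<alpha> * (\<Prod>i<d. y i ^ \<alpha> i) * t ^ \<alpha> d)"
        by (rule sum.group[symmetric]) (use Suc.prems(1) K in auto)
      also have "\<dots> = (\<Sum>e\<le>K. g y e * t ^ e)"
        unfolding g_def by (intro sum.cong refl) (auto simp: sum_distrib_right)
      finally show ?thesis by simp
    qed
    then have "\<forall>e\<le>K. g y e = 0" using polyfun_eq_0[of "g y" K] by blast
    then show ?thesis using that by auto
  qed
  show ?case
  proof
    fix \<alpha>0 assume a0: "\<alpha>0 \<in> S"
    define e where "e = \<alpha>0 d"
    define Se where "Se = {\<alpha>\<in>S. \<alpha> d = e}"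
    define T where "T = (\<lambda>\<alpha>. \<alpha>(d := 0)) ` Se"
    define c' where "c' \<beta> = c (\<beta>(d := e))" for \<beta>
    have inj: "inj_on (\<lambda>\<alpha>. \<alpha>(d := 0)) Se"
      by (rule inj_onI) (metis (mono_tags, lifting) Se_def fun_upd_triv fun_upd_upd mem_Collect_eq)
    have "\<forall>\<beta>\<in>T. c' \<beta> = 0"
    proof (rule Suc.IH)
      show "finite T" using Suc.prems(1) by (auto simp: T_def Se_def)
      show "\<forall>\<beta>\<in>T. \<forall>i\<ge>d. \<beta> i = 0" using Suc.prems(2) by (auto simp: T_def Se_def)
      show "\<forall>x. (\<Sum>\<beta>\<in>T. c' \<beta> * (\<Prod>i<d. x i ^ \<beta> i)) = 0"
      proof
        fix x
        have "(\<Sum>\<beta>\<in>T. c' \<beta> * (\<Prod>i<d. x i ^ \<beta> i)) = (\<Sum>\<alpha>\<in>Se. c' (\<alpha>(d:=0)) * (\<Prod>i<d. x i ^ (\<alpha>(d:=0)) i))"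
          unfolding T_def by (rule sum.reindex[OF inj, unfolded comp_def])
        also have "\<dots> = g x e" unfolding g_def Se_def c'_def
          by (intro sum.cong refl) (auto intro!: prod.cong arg_cong[where f = c])
        also have "\<dots> = 0" using g0 K a0 e_def by auto
        finally show "(\<Sum>\<beta>\<in>T. c' \<beta> * (\<Prod>i<d. x i ^ \<beta> i)) = 0" .
      qed
    qed
    moreover have "\<alpha>0(d := 0) \<in> T" using a0 by (auto simp: T_def Se_def e_def)
    ultimately show "c \<alpha>0 = 0" by (auto simp: c'_def e_def)
  qed
qed

lemma finite_monoms: "finite (monoms d n)"
proof -
  have "monoms d n \<subseteq> (\<lambda>f i. if i < d then f i else 0) ` ({..<d} \<rightarrow>\<^sub>E {..n})"
  proof
    fix \<alpha> assume a: "\<alpha> \<in> monoms d n"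
    have le: "\<alpha> i \<le> n" if "i < d" for i
      using a that member_le_sum[of i "{..<d}" \<alpha>] by (auto simp: monoms_def)
    show "\<alpha> \<in> (\<lambda>f i. if i < d then f i else 0) ` ({..<d} \<rightarrow>\<^sub>E {..n})"
      by (rule image_eqI[of _ _ "restrict \<alpha> {..<d}"]) (use a le in \<open>auto simp: monoms_def\<close>)
  qed
  then show ?thesis by (rule finite_subset) (auto intro: finite_PiE)
qed

lemma peval_scale:
  "peval d n c (\<lambda>l. t * x l) = (\<Sum>k\<le>n. t ^ k * (\<Sum>\<alpha>\<in>hmon d k. c \<alpha> * (\<Prod>l<d. x l ^ \<alpha> l)))"
proof -
  have "peval d n c (\<lambda>l. t * x l) = (\<Sum>\<alpha>\<in>monoms d n. c \<alpha> * (t ^ (\<Sum>l<d. \<alpha> l) * (\<Prod>l<d. x l ^ \<alpha> l)))"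
    unfolding peval_def
    by (intro sum.cong refl) (simp add: power_mult_distrib prod.distrib power_sum)
  also have "\<dots> = (\<Sum>k\<le>n. \<Sum>\<alpha>\<in>{\<alpha>\<in>monoms d n. (\<Sum>l<d. \<alpha> l) = k}. c \<alpha> * (t ^ (\<Sum>l<d. \<alpha> l) * (\<Prod>l<d. x l ^ \<alpha> l)))"
    apply (rule sum.group[symmetric]) using finite_monoms[of d n] unfolding monoms_def by auto
  also have "\<dots> = (\<Sum>k\<le>n. t ^ k * (\<Sum>\<alpha>\<in>hmon d k. c \<alpha> * (\<Prod>l<d. x l ^ \<alpha> l)))"
  proof (intro sum.cong refl)
    fix k assume k: "k \<in> {..n}"
    have "{\<alpha>\<in>monoms d n. (\<Sum>l<d. \<alpha> l) = k} = hmon d k" using k by (auto simp: monoms_def hmon_def)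
    then show "(\<Sum>\<alpha>\<in>{\<alpha>\<in>monoms d n. (\<Sum>l<d. \<alpha> l) = k}. c \<alpha> * (t ^ (\<Sum>l<d. \<alpha> l) * (\<Prod>l<d. x l ^ \<alpha> l)))
       = t ^ k * (\<Sum>\<alpha>\<in>hmon d k. c \<alpha> * (\<Prod>l<d. x l ^ \<alpha> l))"
      by (auto simp: sum_distrib_left hmon_def intro!: sum.cong)
  qed
  finally show ?thesis .
qed

lemma peval_zero_iff:
  "(\<forall>t. peval d n c (\<lambda>l. t * x l) = 0) \<longleftrightarrow> (\<forall>k\<le>n. (\<Sum>\<alpha>\<in>hmon d k. c \<alpha> * (\<Prod>l<d. x l ^ \<alpha> l)) = 0)"
  unfolding peval_scale using polyfun_eq_0[of "\<lambda>k. \<Sum>\<alpha>\<in>hmon d k. c \<alpha> * (\<Prod>l<d. x l ^ \<alpha> l)" n]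
  by (simp add: mult.commute)

lemma hmon_sub_monoms: "k \<le> n \<Longrightarrow> hmon d k \<subseteq> monoms d n"
  by (auto simp: hmon_def monoms_def)


inductive polyfun :: "'i set \<Rightarrow> (('i \<Rightarrow> real) \<Rightarrow> real) \<Rightarrow> bool" for I where
  pf_const: "polyfun I (\<lambda>x. a)"
| pf_var: "i \<in> I \<Longrightarrow> polyfun I (\<lambda>x. x i)"
| pf_add: "polyfun I f \<Longrightarrow> polyfun I g \<Longrightarrow> polyfun I (\<lambda>x. f x + g x)"
| pf_mult: "polyfun I f \<Longrightarrow> polyfun I g \<Longrightarrow> polyfun I (\<lambda>x. f x * g x)"

lemma pf_sum: "finite A \<Longrightarrow> (\<And>a. a \<in> A \<Longrightarrow> polyfun I (f a)) \<Longrightarrow> polyfun I (\<lambda>x. \<Sum>a\<in>A. f a x)"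
  by (induction A rule: finite_induct) (auto intro: polyfun.intros)

lemma pf_prod: "finite A \<Longrightarrow> (\<And>a. a \<in> A \<Longrightarrow> polyfun I (f a)) \<Longrightarrow> polyfun I (\<lambda>x. \<Prod>a\<in>A. f a x)"
  by (induction A rule: finite_induct) (auto intro: polyfun.intros)

lemma pf_pow: "polyfun I f \<Longrightarrow> polyfun I (\<lambda>x. f x ^ k)"
  by (induction k) (auto intro: polyfun.intros)

lemma pf_dep: "polyfun I f \<Longrightarrow> (\<And>i. i \<in> I \<Longrightarrow> x i = y i) \<Longrightarrow> f x = f y"
  by (induction rule: polyfun.induct) auto

lemma pf_meas: "polyfun I f \<Longrightarrow> f \<in> borel_measurable (PiM I (\<lambda>_. lborel))"
  by (induction rule: polyfun.induct) (auto intro: measurable_component_singleton)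

lemma pf_decomp:
  fixes I :: "'i set"
  assumes "polyfun (insert j I) f"
  shows "\<exists>K q. (\<forall>k. polyfun I (q k)) \<and> (\<forall>k>K. q k = (\<lambda>_. 0)) \<and> (\<forall>x. f x = (\<Sum>k\<le>K. q k x * x j ^ k))"
  using assms
proof (induction rule: polyfun.induct)
  case (pf_const a)
  let ?q = "\<lambda>k::nat. if k = 0 then (\<lambda>x::'i \<Rightarrow> real. a) else (\<lambda>_. 0)"
  have h1: "\<forall>k. polyfun I (?q k)" using polyfun.pf_const[of I] by simp
  have h2: "\<forall>k>0. ?q k = (\<lambda>_. 0)" by simp
  have h3: "\<forall>x. a = (\<Sum>k\<le>0. ?q k x * x j ^ k)" by simp
  show ?case by (intro exI[of _ 0] exI[of _ ?q] conjI h1 h2 h3)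
next
  case (pf_var i)
  show ?case
  proof (cases "i = j")
    case True
    let ?q = "\<lambda>k::nat. if k = 1 then (\<lambda>x::'i \<Rightarrow> real. 1) else (\<lambda>_. 0)"
    have h1: "\<forall>k. polyfun I (?q k)" using polyfun.pf_const[of I] by simp
    have h2: "\<forall>k>1. ?q k = (\<lambda>_. 0)" by simp
    have h3: "\<forall>x. x i = (\<Sum>k\<le>1. ?q k x * x j ^ k)" by (simp add: True)
    show ?thesis by (intro exI[of _ 1] exI[of _ ?q] conjI h1 h2 h3)
  next
    case False
    then have iI: "i \<in> I" using pf_var by auto
    let ?q = "\<lambda>k::nat. if k = 0 then (\<lambda>x::'i \<Rightarrow> real. x i) else (\<lambda>_. 0)"
    have h1: "\<forall>k. polyfun I (?q k)" using polyfun.pf_const[of I] polyfun.pf_var[OF iI] by simp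
    have h2: "\<forall>k>0. ?q k = (\<lambda>_. 0)" by simp
    have h3: "\<forall>x. x i = (\<Sum>k\<le>0. ?q k x * x j ^ k)" by simp
    show ?thesis by (intro exI[of _ 0] exI[of _ ?q] conjI h1 h2 h3)
  qed
next
  case (pf_add f g)
  obtain K1 q1 where 1: "\<forall>k. polyfun I (q1 k)" "\<forall>k>K1. q1 k = (\<lambda>_. 0)" "\<forall>x. f x = (\<Sum>k\<le>K1. q1 k x * x j ^ k)"
    using pf_add.IH(1) by blast
  obtain K2 q2 where 2: "\<forall>k. polyfun I (q2 k)" "\<forall>k>K2. q2 k = (\<lambda>_. 0)" "\<forall>x. g x = (\<Sum>k\<le>K2. q2 k x * x j ^ k)"
    using pf_add.IH(2) by blast
  define K where "K = max K1 K2"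
  have e1: "(\<Sum>k\<le>K1. q1 k x * x j ^ k) = (\<Sum>k\<le>K. q1 k x * x j ^ k)" for x
    by (rule sum.mono_neutral_left) (use 1 in \<open>auto simp: K_def\<close>)
  have e2: "(\<Sum>k\<le>K2. q2 k x * x j ^ k) = (\<Sum>k\<le>K. q2 k x * x j ^ k)" for x
    by (rule sum.mono_neutral_left) (use 2 in \<open>auto simp: K_def\<close>)
  show ?case
  proof (intro exI[of _ K] exI[of _ "\<lambda>k x. q1 k x + q2 k x"] conjI allI impI)
    fix k show "polyfun I (\<lambda>x. q1 k x + q2 k x)" using 1(1) 2(1) by (blast intro: polyfun.intros)
  next
    fix k assume "K < k" then show "(\<lambda>x. q1 k x + q2 k x) = (\<lambda>_. 0)"
      using 1(2) 2(2) by (simp add: K_def)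
  next
    fix x show "f x + g x = (\<Sum>k\<le>K. (q1 k x + q2 k x) * x j ^ k)"
      unfolding 1(3)[rule_format] 2(3)[rule_format] e1 e2 by (simp add: distrib_right sum.distrib)
  qed
next
  case (pf_mult f g)
  obtain K1 q1 where 1: "\<forall>k. polyfun I (q1 k)" "\<forall>k>K1. q1 k = (\<lambda>_. 0)" "\<forall>x. f x = (\<Sum>k\<le>K1. q1 k x * x j ^ k)"
    using pf_mult.IH(1) by blast
  obtain K2 q2 where 2: "\<forall>k. polyfun I (q2 k)" "\<forall>k>K2. q2 k = (\<lambda>_. 0)" "\<forall>x. g x = (\<Sum>k\<le>K2. q2 k x * x j ^ k)"
    using pf_mult.IH(2) by blast
  show ?case
  proof (intro exI[of _ "K1 + K2"] exI[of _ "\<lambda>r x. \<Sum>k\<le>r. q1 k x * q2 (r - k) x"] conjI allI impI)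
    fix r show "polyfun I (\<lambda>x. \<Sum>k\<le>r. q1 k x * q2 (r - k) x)"
    proof (rule pf_sum)
      fix k show "polyfun I (\<lambda>x. q1 k x * q2 (r - k) x)"
        using polyfun.pf_mult[OF 1(1)[rule_format, of k] 2(1)[rule_format, of "r - k"]] .
    qed simp
  next
    fix r assume r: "K1 + K2 < r"
    show "(\<lambda>x. \<Sum>k\<le>r. q1 k x * q2 (r - k) x) = (\<lambda>_. 0)"
    proof
      fix x
      have "q1 k x * q2 (r - k) x = 0" if "k \<le> r" for k
      proof (cases "k > K1")
        case True then show ?thesis using 1(2) by simp
      next
        case False then have "r - k > K2" using r that by linarith
        then show ?thesis using 2(2) by simp
      qed
      then show "(\<Sum>k\<le>r. q1 k x * q2 (r - k) x) = 0" by (intro sum.neutral) auto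
    qed
  next
    fix x
    show "f x * g x = (\<Sum>r\<le>K1 + K2. (\<Sum>k\<le>r. q1 k x * q2 (r - k) x) * x j ^ r)"
      unfolding 1(3)[rule_format] 2(3)[rule_format]
      by (rule polynomial_product) (use 1 2 in auto)
  qed
qed

lemma lborel_prod_sf: "product_sigma_finite (\<lambda>_::'i. lborel :: real measure)"
  by (simp add: product_sigma_finite_def lborel.sigma_finite_measure_axioms)

lemma pf_null:
  fixes I :: "'i set"
  assumes "finite I" "polyfun I f" "f x0 \<noteq> 0"
  shows "{x \<in> space (PiM I (\<lambda>_. lborel)). f x = 0} \<in> null_sets (PiM I (\<lambda>_. lborel))"
  using assms
proof (induction I arbitrary: f x0 rule: finite_induct)
  case empty
  have fx: "f x = f x0" for x by (rule pf_dep[OF empty.prems(1)]) auto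
  have "f x \<noteq> 0" for x using fx empty.prems(2) by metis
  then have e: "{x \<in> space (PiM {} (\<lambda>_. lborel)). f x = 0} = {}" by auto
  show ?case unfolding e by simp
next
  case (insert j I)
  interpret product_sigma_finite "\<lambda>_::'i. lborel :: real measure" by (rule lborel_prod_sf)
  obtain K q where q: "\<forall>k. polyfun I (q k)" "\<forall>k>K. q k = (\<lambda>_. 0)" "\<forall>x. f x = (\<Sum>k\<le>K. q k x * x j ^ k)"
    using pf_decomp[OF insert.prems(1)] by blast
  have "\<exists>k\<le>K. q k x0 \<noteq> 0"
  proof (rule ccontr)
    assume "\<not> (\<exists>k\<le>K. q k x0 \<noteq> 0)"
    then have "(\<Sum>k\<le>K. q k x0 * x0 j ^ k) = 0" by (intro sum.neutral) auto
    then show False using insert.prems(2) q(3)[rule_format, of x0] by simp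
  qed
  then obtain k0 where k0: "k0 \<le> K" "q k0 x0 \<noteq> 0" by blast
  let ?P = "PiM I (\<lambda>_. lborel :: real measure)"
  let ?Q = "PiM (insert j I) (\<lambda>_. lborel :: real measure)"
  define Z where "Z = {y \<in> space ?P. q k0 y = 0}"
  have Z: "Z \<in> null_sets ?P" unfolding Z_def by (rule insert.IH[OF q(1)[rule_format] k0(2)])
  define A where "A = {x \<in> space ?Q. f x = 0}"
  have fm: "f \<in> borel_measurable ?Q" by (rule pf_meas[OF insert.prems(1)])
  have "f -` {0} \<inter> space ?Q \<in> sets ?Q" by (rule measurable_sets[OF fm]) simp
  moreover have "f -` {0} \<inter> space ?Q = A" unfolding A_def by blast
  ultimately have Am: "A \<in> sets ?Q" by simp
  have "emeasure ?Q A = (\<integral>\<^sup>+ x. indicator A x \<partial>?Q)" using Am by simp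
  also have "\<dots> = (\<integral>\<^sup>+ y. (\<integral>\<^sup>+ t. indicator A (y(j := t)) \<partial>lborel) \<partial>?P)"
    by (rule product_nn_integral_insert[OF insert.hyps(1,2) borel_measurable_indicator[OF Am]])
  also have "\<dots> = (\<integral>\<^sup>+ y. 0 \<partial>?P)"
  proof (rule nn_integral_cong_AE)
    have "AE y in ?P. y \<notin> Z" using Z by (rule AE_not_in)
    then show "AE y in ?P. (\<integral>\<^sup>+ t. indicator A (y(j := t)) \<partial>lborel) = 0"
    proof (rule AE_mp, intro AE_I2 impI)
      fix y assume y: "y \<in> space ?P" "y \<notin> Z"
      then have qy: "q k0 y \<noteq> 0" by (auto simp: Z_def)
      have qeq: "q k (y(j := t)) = q k y" for k t
        by (rule pf_dep[OF q(1)[rule_format]]) (use insert.hyps in auto)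
      define R where "R = {t. (\<Sum>k\<le>K. q k y * t ^ k) = 0}"
      have Rfin: "finite R" unfolding R_def by (rule polyfun_roots_finite[where c = "\<lambda>k. q k y", OF qy k0(1)])
      have R0: "R \<in> null_sets lborel" using Rfin by (rule finite_imp_null_set_lborel)
      have "indicator A (y(j := t)) \<le> (indicator R t :: ennreal)" for t
        by (auto simp: indicator_def A_def R_def q(3)[rule_format, of "y(j:=t)"] qeq)
      then have "(\<integral>\<^sup>+ t. indicator A (y(j := t)) \<partial>lborel) \<le> (\<integral>\<^sup>+ t. indicator R t \<partial>lborel)"
        by (intro nn_integral_mono) auto
      also have "\<dots> = 0" by (simp add: nn_integral_indicator[OF null_setsD2[OF R0]] null_setsD1[OF R0])
      finally show "(\<integral>\<^sup>+ t. indicator A (y(j := t)) \<partial>lborel) = 0" by simp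
    qed
  qed
  also have "\<dots> = 0" by simp
  finally show ?case using Am by (auto simp: A_def)
qed


definition mon :: "nat \<Rightarrow> (nat \<Rightarrow> nat) \<Rightarrow> (nat \<Rightarrow> real) \<Rightarrow> real" where
  "mon d \<alpha> x = (\<Prod>l<d. x l ^ \<alpha> l)"

definition Amat :: "nat \<Rightarrow> (nat \<Rightarrow> nat) list \<Rightarrow> (nat \<Rightarrow> nat \<Rightarrow> real) \<Rightarrow> real mat" where
  "Amat d xs W = Matrix.mat (length xs) (length xs) (\<lambda>(r, j). mon d (xs ! r) (W j))"

lemma Amat_carrier: "Amat d xs W \<in> carrier_mat (length xs) (length xs)"
  by (simp add: Amat_def)

lemma sum_set_nth: "distinct xs \<Longrightarrow> (\<Sum>\<alpha>\<in>set xs. g \<alpha>) = (\<Sum>r<length xs. g (xs ! r))"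
proof -
  assume dx: "distinct xs"
  have s: "set xs = (!) xs ` {..<length xs}" by (auto simp: set_conv_nth)
  have "inj_on ((!) xs) {..<length xs}" using dx by (intro inj_on_nth) auto
  then show ?thesis unfolding s by (simp add: sum.reindex)
qed

lemma scalar_prod_sum: "v \<bullet> w = (\<Sum>i<dim_vec w. v $ i * w $ i)"
  unfolding scalar_prod_def by (simp add: atLeast0LessThan)

lemma Amat_inj:
  assumes "Determinant.det (Amat d xs W) \<noteq> 0"
    and "\<forall>j<length xs. (\<Sum>r<length xs. c r * mon d (xs ! r) (W j)) = 0"
  shows "\<forall>r<length xs. c r = 0"
proof -
  let ?D = "length xs"
  let ?A = "Amat d xs W"
  have At: "transpose_mat ?A \<in> carrier_mat ?D ?D" using Amat_carrier by simp
  have "Determinant.det (transpose_mat ?A) \<noteq> 0" using assms(1) det_transpose[OF Amat_carrier] by simp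
  then have nz: "\<not> (\<exists>v. v \<in> carrier_vec ?D \<and> v \<noteq> 0\<^sub>v ?D \<and> transpose_mat ?A *\<^sub>v v = 0\<^sub>v ?D)"
    using det_0_iff_vec_prod_zero[OF At] by blast
  let ?u = "Matrix.vec ?D c"
  have "transpose_mat ?A *\<^sub>v ?u = 0\<^sub>v ?D"
  proof (rule eq_vecI)
    fix j assume "j < dim_vec (0\<^sub>v ?D :: real vec)"
    then have j: "j < ?D" by simp
    have "(transpose_mat ?A *\<^sub>v ?u) $ j = (\<Sum>r<?D. ?A $$ (r, j) * c r)"
      using j by (simp add: scalar_prod_sum Amat_def)
    also have "\<dots> = (\<Sum>r<?D. c r * mon d (xs ! r) (W j))"
      using j by (intro sum.cong refl) (simp add: Amat_def)
    also have "\<dots> = 0" using assms(2) j by simp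
    finally show "(transpose_mat ?A *\<^sub>v ?u) $ j = 0\<^sub>v ?D $ j" using j by simp
  qed (simp add: Amat_def)
  moreover have "?u \<in> carrier_vec ?D" by simp
  ultimately have "?u = 0\<^sub>v ?D" using nz by blast
  then show ?thesis by (metis index_vec index_zero_vec(1))
qed

lemma det_exists:
  assumes dx: "distinct xs" and sx: "set xs = hmon d k"
  shows "\<exists>W. Determinant.det (Amat d xs W) \<noteq> 0"
proof -
  let ?D = "length xs"
  define indep where "indep (j::nat) (W::nat \<Rightarrow> nat \<Rightarrow> real) \<longleftrightarrow> (\<forall>a. (\<forall>r<?D. (\<Sum>i<j. a i * mon d (xs ! r) (W i)) = 0) \<longrightarrow> (\<forall>i<j. a i = (0::real)))" for j W
  have "j \<le> ?D \<Longrightarrow> \<exists>W. indep j W" for j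
  proof (induction j)
    case 0 then show ?case by (auto simp: indep_def)
  next
    case (Suc j)
    then obtain W where W: "indep j W" by auto
    have jD: "j < card {..<?D}" using Suc.prems by simp
    obtain c where c: "\<forall>x. x \<notin> {..<?D} \<longrightarrow> c x = 0" "\<exists>x\<in>{..<?D}. c x \<noteq> 0"
      "\<forall>i<j. (\<Sum>r\<in>{..<?D}. mon d (xs ! r) (W i) * c r) = 0"
      using underdet[OF finite_lessThan jD, of "\<lambda>i r. mon d (xs ! r) (W i)"] by blast
    have "\<exists>p. (\<Sum>r<?D. c r * mon d (xs ! r) p) \<noteq> 0"
    proof (rule ccontr)
      assume "\<not> ?thesis"
      then have all0: "\<forall>p. (\<Sum>r<?D. c r * mon d (xs ! r) p) = 0" by auto
      define c' where "c' \<alpha> = c (inv_into {..<?D} ((!) xs) \<alpha>)" for \<alpha>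
      have inj: "inj_on ((!) xs) {..<?D}" using dx by (intro inj_on_nth) auto
      have c'r: "c' (xs ! r) = c r" if "r < ?D" for r
        unfolding c'_def using inv_into_f_f[OF inj] that by simp
      have "\<forall>\<alpha>\<in>set xs. c' \<alpha> = 0"
      proof (rule mono_ident)
        show "finite (set xs)" by simp
        show "\<forall>\<alpha>\<in>set xs. \<forall>i\<ge>d. \<alpha> i = 0" using sx by (auto simp: hmon_def)
        show "\<forall>x. (\<Sum>\<alpha>\<in>set xs. c' \<alpha> * (\<Prod>i<d. x i ^ \<alpha> i)) = 0"
        proof
          fix x
          have "(\<Sum>\<alpha>\<in>set xs. c' \<alpha> * (\<Prod>i<d. x i ^ \<alpha> i)) = (\<Sum>r<?D. c r * mon d (xs ! r) x)"
            by (simp add: sum_set_nth[OF dx] c'r mon_def)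
          then show "(\<Sum>\<alpha>\<in>set xs. c' \<alpha> * (\<Prod>i<d. x i ^ \<alpha> i)) = 0" using all0 by simp
        qed
      qed
      then have "c r = 0" if "r < ?D" for r using c'r[OF that] that by (metis nth_mem)
      then show False using c(2) by auto
    qed
    then obtain p where p: "(\<Sum>r<?D. c r * mon d (xs ! r) p) \<noteq> 0" by blast
    define W' where "W' = W(j := p)"
    have "indep (Suc j) W'"
      unfolding indep_def
    proof (rule allI, rule impI)
      fix a :: "nat \<Rightarrow> real"
      assume h: "\<forall>r<?D. (\<Sum>i<Suc j. a i * mon d (xs ! r) (W' i)) = 0"
      have h': "(\<Sum>i<Suc j. a i * mon d (xs ! r) (W' i)) = (\<Sum>i<j. a i * mon d (xs ! r) (W i)) + a j * mon d (xs ! r) p" for r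
        by (simp add: W'_def)
      have "0 = (\<Sum>r<?D. c r * (\<Sum>i<Suc j. a i * mon d (xs ! r) (W' i)))" using h by simp
      also have "\<dots> = (\<Sum>r<?D. c r * (\<Sum>i<j. a i * mon d (xs ! r) (W i))) + a j * (\<Sum>r<?D. c r * mon d (xs ! r) p)"
        unfolding h' by (simp add: algebra_simps sum.distrib sum_distrib_left)
      also have "(\<Sum>r<?D. c r * (\<Sum>i<j. a i * mon d (xs ! r) (W i))) = (\<Sum>i<j. a i * (\<Sum>r<?D. mon d (xs ! r) (W i) * c r))"
        by (simp add: sum_distrib_left sum_distrib_right algebra_simps sum.swap[of _ "{..<?D}"])
      also have "\<dots> = 0" using c(3) by simp
      finally have aj: "a j = 0" using p by simp
      then have "\<forall>r<?D. (\<Sum>i<j. a i * mon d (xs ! r) (W i)) = 0" using h h' by simp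
      then have "\<forall>i<j. a i = 0" using W unfolding indep_def by blast
      then show "\<forall>i<Suc j. a i = 0" using aj by (auto simp: less_Suc_eq)
    qed
    then show "\<exists>W. indep (Suc j) W" by blast
  qed
  then obtain W where W: "indep ?D W" by blast
  show ?thesis
  proof (intro exI[of _ W] notI)
    assume "Determinant.det (Amat d xs W) = 0"
    then obtain v where v: "v \<in> carrier_vec ?D" "v \<noteq> 0\<^sub>v ?D" "Amat d xs W *\<^sub>v v = 0\<^sub>v ?D"
      using det_0_iff_vec_prod_zero[OF Amat_carrier] by blast
    have "\<forall>r<?D. (\<Sum>i<?D. v $ i * mon d (xs ! r) (W i)) = 0"
    proof (intro allI impI)
      fix r assume r: "r < ?D"
      have "(Amat d xs W *\<^sub>v v) $ r = 0" using v(3) r by simp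
      moreover have "(Amat d xs W *\<^sub>v v) $ r = (\<Sum>i<?D. v $ i * mon d (xs ! r) (W i))"
        using r v(1) by (auto simp: scalar_prod_sum Amat_def intro!: sum.cong)
      ultimately show "(\<Sum>i<?D. v $ i * mon d (xs ! r) (W i)) = 0" by simp
    qed
    then have "\<forall>i<?D. v $ i = 0" using W unfolding indep_def by blast
    then have "v = 0\<^sub>v ?D" using v(1) by (intro eq_vecI) auto
    then show False using v(2) by simp
  qed
qed

lemma det_polyfun:
  assumes "length xs \<le> N"
  shows "polyfun ({..<d} \<times> {..<N}) (\<lambda>V. Determinant.det (Amat d xs (\<lambda>j l. V (l, j))))"
proof -
  let ?D = "length xs"
  have eq: "Determinant.det (Amat d xs (\<lambda>j l. V (l, j))) =
    (\<Sum>p\<in>{p. p permutes {0..<?D}}. signof p * (\<Prod>i\<in>{0..<?D}. \<Prod>l<d. V (l, p i) ^ (xs ! i) l))" for V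
    unfolding det_def'[OF Amat_carrier]
    by (intro sum.cong refl arg_cong2[where f = "(*)"] prod.cong)
       (auto simp: Amat_def mon_def permutes_in_image)
  show ?thesis unfolding eq
  proof (intro pf_sum pf_mult pf_prod pf_pow)
    show "finite {p. p permutes {0..<?D}}" by (simp add: finite_permutations)
    fix p assume p: "p \<in> {p. p permutes {0..<?D}}"
    show "polyfun ({..<d} \<times> {..<N}) (\<lambda>x. signof p)" by (rule pf_const)
    fix i l assume i: "i \<in> {0..<?D}" and l: "l \<in> {..<d}"
    have "p i < ?D" using p i by (auto simp: permutes_in_image)
    then show "polyfun ({..<d} \<times> {..<N}) (\<lambda>x. x (l, p i))" using l assms by (intro pf_var) auto
  qed auto
qed


definition XS :: "nat \<Rightarrow> nat \<Rightarrow> (nat \<Rightarrow> nat) list" where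
  "XS d k = (SOME xs. distinct xs \<and> set xs = hmon d k)"

lemma XS: "distinct (XS d k)" "set (XS d k) = hmon d k" "length (XS d k) = card (hmon d k)"
proof -
  have "\<exists>xs. distinct xs \<and> set xs = hmon d k" using finite_distinct_list[OF finite_hmon] by blast
  then have *: "distinct (XS d k) \<and> set (XS d k) = hmon d k" unfolding XS_def by (rule someI_ex)
  then show "distinct (XS d k)" "set (XS d k) = hmon d k" by auto
  then show "length (XS d k) = card (hmon d k)" using distinct_card by metis
qed

lemma good_imp:
  assumes d: "1 \<le> d" and N: "N = (n + d - 1) choose n"
    and good: "\<forall>k\<le>n. Determinant.det (Amat d (XS d k) (\<lambda>j l. V (l, j))) \<noteq> 0"
    and c: "c \<in> polys d n"
    and van: "\<forall>i<N. \<forall>t::real. peval d n c (\<lambda>l. t * V (l, i)) = 0"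
  shows "c = (\<lambda>_. 0)"
proof
  fix \<alpha>
  show "c \<alpha> = 0"
  proof (cases "\<alpha> \<in> monoms d n")
    case False then show ?thesis using c by (auto simp: polys_def)
  next
    case True
    define k where "k = (\<Sum>i<d. \<alpha> i)"
    have kn: "k \<le> n" and ak: "\<alpha> \<in> hmon d k" using True by (auto simp: k_def monoms_def hmon_def)
    let ?xs = "XS d k"
    have DN: "length ?xs \<le> N"
      using XS(3)[of d k] card_hmon_mono[OF d kn] card_hmon[of d n] N by (simp add: add.commute)
    have hv: "(\<Sum>\<beta>\<in>hmon d k. c \<beta> * (\<Prod>l<d. V (l, i) ^ \<beta> l)) = 0" if "i < N" for i
      using van that kn peval_zero_iff[of d n c "\<lambda>l. V (l, i)"] by blast
    have "\<forall>r<length ?xs. c (?xs ! r) = 0"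
    proof (rule Amat_inj)
      show "Determinant.det (Amat d ?xs (\<lambda>j l. V (l, j))) \<noteq> 0" using good kn by blast
      show "\<forall>j<length ?xs. (\<Sum>r<length ?xs. c (?xs ! r) * mon d (?xs ! r) (\<lambda>l. V (l, j))) = 0"
      proof (intro allI impI)
        fix j assume j: "j < length ?xs"
        have "(\<Sum>r<length ?xs. c (?xs ! r) * mon d (?xs ! r) (\<lambda>l. V (l, j)))
            = (\<Sum>\<beta>\<in>set ?xs. c \<beta> * (\<Prod>l<d. V (l, j) ^ \<beta> l))"
          by (simp add: sum_set_nth[OF XS(1)] mon_def)
        also have "\<dots> = 0" using hv[of j] j DN XS(2) by simp
        finally show "(\<Sum>r<length ?xs. c (?xs ! r) * mon d (?xs ! r) (\<lambda>l. V (l, j))) = 0" .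
      qed
    qed
    moreover obtain r where "r < length ?xs" "?xs ! r = \<alpha>" using ak XS(2)[of d k] by (metis in_set_conv_nth)
    ultimately show ?thesis by auto
  qed
qed

theorem theorem3p13:
  fixes d n :: nat
  assumes "1 \<le> d" and "1 \<le> n"
  defines "N \<equiv> (n + d - 1) choose n"
  shows
    "(\<forall>(M :: 'a measure) (V :: 'a \<Rightarrow> (nat \<times> nat \<Rightarrow> real)) f.
        prob_space M \<and> distributed M (PiM ({..<d} \<times> {..<N}) (\<lambda>_. lborel)) V f \<longrightarrow>
        (AE \<omega> in M. \<forall>c \<in> polys d n.
            c = (\<lambda>_. 0) \<longleftrightarrow>
            (\<forall>i<N. \<forall>t::real. peval d n c (\<lambda>k. t * V \<omega> (k, i)) = 0)))
     \<and> (\<forall>m<N. \<forall>v :: nat \<Rightarrow> nat \<Rightarrow> real.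
        \<exists>c \<in> polys d n. c \<noteq> (\<lambda>_. 0) \<and>
            (\<forall>i<m. \<forall>t::real. peval d n c (\<lambda>k. t * v i k) = 0))"
proof (intro conjI allI impI)
  fix M :: "'a measure" and V :: "'a \<Rightarrow> (nat \<times> nat \<Rightarrow> real)" and f
  assume h: "prob_space M \<and> distributed M (PiM ({..<d} \<times> {..<N}) (\<lambda>_. lborel)) V f"
  let ?P = "PiM ({..<d} \<times> {..<N}) (\<lambda>_. lborel :: real measure)"
  have dist: "distr M ?P V = density ?P f" "f \<in> borel_measurable ?P" "V \<in> measurable M ?P"
    using h by (auto simp: distributed_def)
  define F where "F k V = Determinant.det (Amat d (XS d k) (\<lambda>j l. V (l, j)))" for k and V :: "nat \<times> nat \<Rightarrow> real"
  define Z where "Z = (\<Union>k\<le>n. {x \<in> space ?P. F k x = 0})"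
  have Znull: "Z \<in> null_sets ?P"
    unfolding Z_def
  proof (rule null_sets.finite_UN)
    fix k assume k: "k \<in> {..n}"
    have DN: "length (XS d k) \<le> N"
      using XS(3)[of d k] card_hmon_mono[OF assms(1), of k n] k card_hmon[of d n] unfolding N_def by (simp add: add.commute)
    obtain W where W: "Determinant.det (Amat d (XS d k) W) \<noteq> 0" using det_exists[OF XS(1,2)] by blast
    have nz: "Determinant.det (Amat d (XS d k) (\<lambda>j l. (\<lambda>(l, j). W j l) (l, j))) \<noteq> 0" using W by simp
    have fin: "finite ({..<d} \<times> {..<N})" by simp
    show "{x \<in> space ?P. F k x = 0} \<in> null_sets ?P"
      unfolding F_def by (rule pf_null[OF fin det_polyfun[OF DN] nz])
  qed simp
  have ae: "AE x in ?P. x \<in> Z \<longrightarrow> f x = 0" using AE_not_in[OF Znull] by eventually_elim simp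
  have "Z \<in> null_sets (density ?P f)"
    using Znull dist(2) ae by (auto simp: null_sets_density_iff)
  then have Zd: "Z \<in> null_sets (distr M ?P V)" using dist(1) by simp
  have sZ: "Z \<in> sets ?P" using Znull by auto
  have "emeasure M (V -` Z \<inter> space M) = 0"
    using Zd emeasure_distr[OF dist(3) sZ] by auto
  then have Mnull: "V -` Z \<inter> space M \<in> null_sets M"
    using measurable_sets[OF dist(3) sZ] by auto
  show "AE \<omega> in M. \<forall>c \<in> polys d n. c = (\<lambda>_. 0) \<longleftrightarrow>
            (\<forall>i<N. \<forall>t::real. peval d n c (\<lambda>k. t * V \<omega> (k, i)) = 0)"
  proof (rule AE_I'[OF Mnull], rule subsetI)
    fix \<omega> assume w: "\<omega> \<in> {\<omega> \<in> space M. \<not> (\<forall>c \<in> polys d n. c = (\<lambda>_. 0) \<longleftrightarrow>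
            (\<forall>i<N. \<forall>t::real. peval d n c (\<lambda>k. t * V \<omega> (k, i)) = 0))}"
    show "\<omega> \<in> V -` Z \<inter> space M"
    proof (rule ccontr)
      assume nz: "\<omega> \<notin> V -` Z \<inter> space M"
      have sp: "V \<omega> \<in> space ?P" using w measurable_space[OF dist(3)] by auto
      have good: "\<forall>k\<le>n. Determinant.det (Amat d (XS d k) (\<lambda>j l. V \<omega> (l, j))) \<noteq> 0"
        using nz w sp by (auto simp: Z_def F_def)
      have "\<forall>c \<in> polys d n. c = (\<lambda>_. 0) \<longleftrightarrow> (\<forall>i<N. \<forall>t::real. peval d n c (\<lambda>k. t * V \<omega> (k, i)) = 0)"
      proof (intro ballI iffI)
        fix c assume "c \<in> polys d n" "\<forall>i<N. \<forall>t::real. peval d n c (\<lambda>k. t * V \<omega> (k, i)) = 0"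
        then show "c = (\<lambda>_. 0)" using good_imp[OF assms(1) N_def[THEN meta_eq_to_obj_eq] good] by blast
      next
        fix c assume "c = (\<lambda>_::nat\<Rightarrow>nat. 0::real)"
        then show "\<forall>i<N. \<forall>t::real. peval d n c (\<lambda>k. t * V \<omega> (k, i)) = 0" by (simp add: peval_def)
      qed
      then show False using w by blast
    qed
  qed
next
  fix m v assume m: "m < N"
  let ?S = "hmon d n"
  have cS: "m < card ?S" using m card_hmon[of d n] unfolding N_def by (simp add: add.commute)
  obtain c where c: "\<forall>x. x \<notin> ?S \<longrightarrow> c x = 0" "\<exists>x\<in>?S. c x \<noteq> 0"
    "\<forall>i<m. (\<Sum>\<alpha>\<in>?S. mon d \<alpha> (v i) * c \<alpha>) = 0"
    using underdet[OF finite_hmon cS, of "\<lambda>i \<alpha>. mon d \<alpha> (v i)"] by blast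
  show "\<exists>c \<in> polys d n. c \<noteq> (\<lambda>_. 0) \<and> (\<forall>i<m. \<forall>t::real. peval d n c (\<lambda>k. t * v i k) = 0)"
  proof (intro bexI conjI allI impI)
    show "c \<in> polys d n" using c(1) hmon_sub_monoms[of n n d] by (auto simp: polys_def)
    show "c \<noteq> (\<lambda>_. 0)" using c(2) by auto
    fix i t assume i: "i < m"
    have "\<forall>k\<le>n. (\<Sum>\<alpha>\<in>hmon d k. c \<alpha> * (\<Prod>l<d. v i l ^ \<alpha> l)) = 0"
    proof (intro allI impI)
      fix k assume k: "k \<le> n"
      show "(\<Sum>\<alpha>\<in>hmon d k. c \<alpha> * (\<Prod>l<d. v i l ^ \<alpha> l)) = 0"
      proof (cases "k = n")
        case True
        then show ?thesis using c(3) i by (simp add: mon_def mult.commute)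
      next
        case False
        then have "\<forall>\<alpha>\<in>hmon d k. c \<alpha> = 0" using c(1) by (auto simp: hmon_def)
        then show ?thesis by simp
      qed
    qed
    then show "peval d n c (\<lambda>k. t * v i k) = 0" using peval_zero_iff[of d n c "v i"] by blast
  qed
qed

end
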